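(* Let $x\in\mathcal{X}(\mathbb{Z}_S)$ and let $a(x)=a_1(x)+a_2(x)$ be a cocycle $G_T\to U_2$ representing the class of the path torsor $\pi_1^{u,\mathbb{Q}_p}(\bar X;b,x)$. Let $b_x:G_T\to L_1$ be a cochain with $db_x=c\cup a_1(x)$. Then the $Z$-valued 2-cochain $$\phi_x=b_x\cup a_1(x)-2c\cup a_2(x)$$ on $G_T\times G_T$ is a cocycle.
   Context: Setting. $E$ is an elliptic curve over $\mathbb{Q}$ with origin $e$ and $\operatorname{ord}_{s=1}L(E,s)=1$, $X=E\setminus\{e\}$, $\mathcal{E}$ a regular minimal model over $\mathbb{Z}$, $\mathcal{X}$ the complement of the closure of $e$; $p$ an odd prime of good reduction; $S$ a finite set of places containing $\infty$ and the bad primes, $T=S\cup\{p\}$, $G_T$ the Galois group of the maximal extension of $\mathbb{Q}$ unramified outside $T$. $b$ is a nonzero rational tangent vector at $e$ (tangential base point). $U=\pi_1^{u,\mathbb{Q}_p}(\bar X,b)$, $U_2=U^3\backslash U$ (descending central series), $L=\mathrm{Lie}\,U$, $L_2=L/L^3$, $L_1=L/L^2$, $Z=L^2/L^3\cong\mathbb{Q}_p(1)$; the logarithm identifies $U_2$ with $L_2$, and $L_2=L_1\oplus Z$ via the $G$-equivariant splitting $x\mapsto\frac12(x'-I(x'))$, where $I$ is the automorphism induced by $[-1]$ on $E$ and the canonical path from $-b$ to $b$ ($I=-1$ on $L_1$, $I=\mathrm{id}$ on $Z$). Group law: $(l_1+l_2)*(l_1'+l_2')=(l_1+l_1')+(l_2+l_2'+\frac12[l_1,l_1'])$.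 A cocycle $a=a_1+a_2$ into $U_2$ means $a_1$ is an $L_1$-valued cocycle and $da_2=-\frac12 a_1\cup a_1$. Cup products: for $L_1$-valued 1-cochains, $(c\cup c')(g,h)=[c(g),gc'(h)]$; for a $\mathbb{Q}_p$-valued 1-cochain $c$ and a vector-valued cochain $a$, $(c\cup a)(g,h)=c(g)\,ga(h)$. $c=\log\chi:G_T\to\mathbb{Q}_p$, with $\chi$ the $p$-adic cyclotomic character. *)

theory Defs
  imports "HOL-Algebra.Group" "HOL.Modules"
begin

text \<open>Abstract algebraic setting: a group G (standing for G_T), a scalar field k
(standing for Q_p), k-modules L1 and Z with k-linear G-actions, a k-bilinear
G-equivariant bracket L1 x L1 -> Z (the Lie bracket of L_2 = L_1 + Z).\<close>

definition linear_action ::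
  "('g, 'm) monoid_scheme \<Rightarrow> ('k::comm_ring_1 \<Rightarrow> 'v::ab_group_add \<Rightarrow> 'v) \<Rightarrow> ('g \<Rightarrow> 'v \<Rightarrow> 'v) \<Rightarrow> bool"
  where "linear_action G s act \<longleftrightarrow>
     (\<forall>v. act \<one>\<^bsub>G\<^esub> v = v) \<and>
     (\<forall>g\<in>carrier G. \<forall>h\<in>carrier G. \<forall>v. act (g \<otimes>\<^bsub>G\<^esub> h) v = act g (act h v)) \<and>
     (\<forall>g\<in>carrier G. \<forall>v w. act g (v + w) = act g v + act g w) \<and>
     (\<forall>g\<in>carrier G. \<forall>r v. act g (s r v) = s r (act g v))"

definition bilinear_map ::
  "('k::comm_ring_1 \<Rightarrow> 'v::ab_group_add \<Rightarrow> 'v) \<Rightarrow> ('k \<Rightarrow> 'w::ab_group_add \<Rightarrow> 'w) \<Rightarrow> ('v \<Rightarrow> 'v \<Rightarrow> 'w) \<Rightarrow> bool"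
  where "bilinear_map sV sW br \<longleftrightarrow>
     (\<forall>x y z. br (x + y) z = br x z + br y z) \<and>
     (\<forall>x y z. br x (y + z) = br x y + br x z) \<and>
     (\<forall>r x y. br (sV r x) y = sW r (br x y)) \<and>
     (\<forall>r x y. br x (sV r y) = sW r (br x y))"

definition cobound1 ::
  "('g, 'm) monoid_scheme \<Rightarrow> ('g \<Rightarrow> 'v \<Rightarrow> 'v) \<Rightarrow> ('g \<Rightarrow> 'v::ab_group_add) \<Rightarrow> 'g \<Rightarrow> 'g \<Rightarrow> 'v"
  where "cobound1 G act f g h = act g (f h) - f (g \<otimes>\<^bsub>G\<^esub> h) + f g"

definition cobound2 ::
  "('g, 'm) monoid_scheme \<Rightarrow> ('g \<Rightarrow> 'v \<Rightarrow> 'v) \<Rightarrow> ('g \<Rightarrow> 'g \<Rightarrow> 'v::ab_group_add) \<Rightarrow> 'g \<Rightarrow> 'g \<Rightarrow> 'g \<Rightarrow> 'v"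
  where "cobound2 G act \<phi> g h k =
     act g (\<phi> h k) - \<phi> (g \<otimes>\<^bsub>G\<^esub> h) k + \<phi> g (h \<otimes>\<^bsub>G\<^esub> k) - \<phi> g h"

definition cocycle1 :: "('g, 'm) monoid_scheme \<Rightarrow> ('g \<Rightarrow> 'v \<Rightarrow> 'v) \<Rightarrow> ('g \<Rightarrow> 'v::ab_group_add) \<Rightarrow> bool"
  where "cocycle1 G act f \<longleftrightarrow> (\<forall>g\<in>carrier G. \<forall>h\<in>carrier G. cobound1 G act f g h = 0)"

definition cocycle2 :: "('g, 'm) monoid_scheme \<Rightarrow> ('g \<Rightarrow> 'v \<Rightarrow> 'v) \<Rightarrow> ('g \<Rightarrow> 'g \<Rightarrow> 'v::ab_group_add) \<Rightarrow> bool"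
  where "cocycle2 G act \<phi> \<longleftrightarrow>
     (\<forall>g\<in>carrier G. \<forall>h\<in>carrier G. \<forall>k\<in>carrier G. cobound2 G act \<phi> g h k = 0)"

definition cup_br :: "('g \<Rightarrow> 'l \<Rightarrow> 'l) \<Rightarrow> ('l \<Rightarrow> 'l \<Rightarrow> 'z) \<Rightarrow> ('g \<Rightarrow> 'l) \<Rightarrow> ('g \<Rightarrow> 'l) \<Rightarrow> 'g \<Rightarrow> 'g \<Rightarrow> 'z"
  where "cup_br act br f f' g h = br (f g) (act g (f' h))"

definition cup_sc :: "('k \<Rightarrow> 'v \<Rightarrow> 'v) \<Rightarrow> ('g \<Rightarrow> 'v \<Rightarrow> 'v) \<Rightarrow> ('g \<Rightarrow> 'k) \<Rightarrow> ('g \<Rightarrow> 'v) \<Rightarrow> 'g \<Rightarrow> 'g \<Rightarrow> 'v"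
  where "cup_sc s act c a g h = s (c g) (act g (a h))"

end

theory Submission
  imports Defs
begin

lemma final_alg:
  fixes sZ :: "'k::field_char_0 \<Rightarrow> 'z::ab_group_add \<Rightarrow> 'z"
  assumes "module sZ"
  shows "(BP - sZ 2 (sZ ch R))
   - (BP + gP - sZ cg Y - sZ 2 (sZ (cg+ch) R))
   + (gP + gQ - sZ 2 (sZ cg (R + S - sZ (-(1/2)) Y)))
   - (gQ - sZ 2 (sZ cg S)) = 0"
proof -
  interpret module sZ by fact
  have "sZ 2 (sZ cg (R + S - sZ (-(1/2)) Y)) = sZ (2*cg) R + sZ (2*cg) S - sZ (2*cg*(-(1/2))) Y"
    by (simp only: scale_right_distrib scale_right_diff_distrib scale_scale mult.assoc)
  also have "2*cg*(-(1/2)) = - cg" by simp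
  finally have e1: "sZ 2 (sZ cg (R + S - sZ (-(1/2)) Y)) = sZ (2*cg) R + sZ (2*cg) S + sZ cg Y" by simp
  have e2: "sZ 2 (sZ (cg+ch) R) = sZ (2*cg) R + sZ (2*ch) R"
    by (simp add: scale_left_distrib scale_right_distrib)
  have e3: "sZ 2 (sZ ch R) = sZ (2*ch) R" by simp
  have e4: "sZ 2 (sZ cg S) = sZ (2*cg) S" by simp
  show ?thesis unfolding e1 e2 e3 e4 by (simp add: algebra_simps)
qed
lemma solve_cob: "x - y + z = (w::'a::ab_group_add) \<Longrightarrow> y = x + z - w"
  by (metis add_diff_cancel_left' add_diff_eq diff_diff_eq2)

lemma act_diff:
  fixes f :: "'u::ab_group_add \<Rightarrow> 'v::ab_group_add"
  assumes "\<forall>v w. f (v + w) = f v + f w"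
  shows "f (v - w) = f v - f w"
proof -
  have "f ((v - w) + w) = f (v - w) + f w" using assms by blast
  hence "f v = f (v - w) + f w" by simp
  thus ?thesis by simp
qed


theorem lemma2p1:
  fixes G :: "('g, 'm) monoid_scheme"
    and sL :: "'k::field_char_0 \<Rightarrow> 'l::ab_group_add \<Rightarrow> 'l"
    and sZ :: "'k \<Rightarrow> 'z::ab_group_add \<Rightarrow> 'z"
    and actL :: "'g \<Rightarrow> 'l \<Rightarrow> 'l"
    and actZ :: "'g \<Rightarrow> 'z \<Rightarrow> 'z"
    and br :: "'l \<Rightarrow> 'l \<Rightarrow> 'z"
    and c :: "'g \<Rightarrow> 'k"
    and a1 :: "'g \<Rightarrow> 'l" and a2 :: "'g \<Rightarrow> 'z" and b :: "'g \<Rightarrow> 'l"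
  assumes "group G"
    and "module sL" and "module sZ"
    and "linear_action G sL actL" and "linear_action G sZ actZ"
    and "bilinear_map sL sZ br"
    and "\<forall>g\<in>carrier G. \<forall>x y. actZ g (br x y) = br (actL g x) (actL g y)"
    and "\<forall>g\<in>carrier G. \<forall>h\<in>carrier G. c (g \<otimes>\<^bsub>G\<^esub> h) = c g + c h"
    and "cocycle1 G actL a1"
    and "\<forall>g\<in>carrier G. \<forall>h\<in>carrier G.
           cobound1 G actZ a2 g h = sZ (- (1/2)) (cup_br actL br a1 a1 g h)"
    and "\<forall>g\<in>carrier G. \<forall>h\<in>carrier G.
           cobound1 G actL b g h = cup_sc sL actL c a1 g h"
  shows "cocycle2 G actZ
           (\<lambda>g h. cup_br actL br b a1 g h - sZ 2 (cup_sc sZ actZ c a2 g h))"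
  proof -
  interpret G: group G by fact
  interpret mL: module sL by fact
  interpret mZ: module sZ by fact
  note LA = assms(4)[unfolded linear_action_def]
  note ZA = assms(5)[unfolded linear_action_def]
  note BL = assms(6)[unfolded bilinear_map_def]
  have brl_add: "\<And>x y z. br (x + y) z = br x z + br y z" using BL by blast
  have brr_add: "\<And>x y z. br x (y + z) = br x y + br x z" using BL by blast
  have brl_sc: "\<And>r x y. br (sL r x) y = sZ r (br x y)" using BL by blast
  have brl_diff: "\<And>x y z. br (x - y) z = br x z - br y z"
    by (rule act_diff[of "\<lambda>x. br x z" for z]) (simp add: brl_add)
  have brr_diff: "\<And>x y z. br x (y - z) = br x y - br x z"
    by (rule act_diff[of "br x" for x]) (simp add: brr_add)
  show ?thesis unfolding cocycle2_def
  proof (intro ballI)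
    fix g h k assume g: "g \<in> carrier G" and h: "h \<in> carrier G" and k: "k \<in> carrier G"
    have gh: "g \<otimes>\<^bsub>G\<^esub> h \<in> carrier G" and hk: "h \<otimes>\<^bsub>G\<^esub> k \<in> carrier G" using g h k by auto
    have aLgh: "\<And>x. actL (g \<otimes>\<^bsub>G\<^esub> h) x = actL g (actL h x)" using LA g h by blast
    have aZgh: "\<And>x. actZ (g \<otimes>\<^bsub>G\<^esub> h) x = actZ g (actZ h x)" using ZA g h by blast
    have aLg_add: "\<And>x y. actL g (x + y) = actL g x + actL g y" using LA g by blast
    have aZg_add: "\<And>x y. actZ g (x + y) = actZ g x + actZ g y" using ZA g by blast
    have aZg_diff: "\<And>x y. actZ g (x - y) = actZ g x - actZ g y"
      by (rule act_diff) (simp add: aZg_add)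
    have aZg_sc: "\<And>r x. actZ g (sZ r x) = sZ r (actZ g x)" using ZA g by blast
    have aZg_br: "\<And>x y. actZ g (br x y) = br (actL g x) (actL g y)" using assms(7) g by blast
    have cgh: "c (g \<otimes>\<^bsub>G\<^esub> h) = c g + c h" using assms(8) g h by blast
    have bgh: "b (g \<otimes>\<^bsub>G\<^esub> h) = actL g (b h) + b g - sL (c g) (actL g (a1 h))"
      using assms(11) g h unfolding cobound1_def cup_sc_def by (intro solve_cob) blast
    have a1hk: "a1 (h \<otimes>\<^bsub>G\<^esub> k) = actL h (a1 k) + a1 h"
      using solve_cob[where w=0] assms(9) h k unfolding cocycle1_def cobound1_def by (metis diff_zero)
    have a2hk: "a2 (h \<otimes>\<^bsub>G\<^esub> k) = actZ h (a2 k) + a2 h - sZ (-(1/2)) (br (a1 h) (actL h (a1 k)))"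
      using assms(10) h k unfolding cobound1_def cup_br_def by (intro solve_cob) blast
    define P where "P = actL g (actL h (a1 k))"
    define Q where "Q = actL g (a1 h)"
    define B where "B = actL g (b h)"
    define R where "R = actZ g (actZ h (a2 k))"
    define S where "S = actZ g (a2 h)"
    define Y where "Y = br Q P"
    have T1: "actZ g (br (b h) (actL h (a1 k)) - sZ 2 (sZ (c h) (actZ h (a2 k))))
        = br B P - sZ 2 (sZ (c h) R)"
      unfolding B_def P_def R_def by (simp add: aZg_diff aZg_sc aZg_br)
    have T2: "br (b (g \<otimes>\<^bsub>G\<^esub> h)) (actL (g \<otimes>\<^bsub>G\<^esub> h) (a1 k)) - sZ 2 (sZ (c (g \<otimes>\<^bsub>G\<^esub> h)) (actZ (g \<otimes>\<^bsub>G\<^esub> h) (a2 k)))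
        = br B P + br (b g) P - sZ (c g) Y - sZ 2 (sZ (c g + c h) R)"
      unfolding bgh aLgh aZgh cgh B_def P_def R_def Y_def Q_def by (simp add: brl_diff brl_add brl_sc)
    have T3: "br (b g) (actL g (a1 (h \<otimes>\<^bsub>G\<^esub> k))) - sZ 2 (sZ (c g) (actZ g (a2 (h \<otimes>\<^bsub>G\<^esub> k))))
        = br (b g) P + br (b g) Q - sZ 2 (sZ (c g) (R + S - sZ (-(1/2)) Y))"
      unfolding a1hk a2hk P_def Q_def R_def S_def Y_def
      by (simp only: aLg_add brr_add aZg_diff aZg_add aZg_sc aZg_br)
    have T4: "br (b g) (actL g (a1 h)) - sZ 2 (sZ (c g) (actZ g (a2 h))) = br (b g) Q - sZ 2 (sZ (c g) S)"
      unfolding Q_def S_def ..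
    show "cobound2 G actZ (\<lambda>g h. cup_br actL br b a1 g h - sZ 2 (cup_sc sZ actZ c a2 g h)) g h k = 0"
      unfolding cobound2_def cup_br_def cup_sc_def T1 T2 T3 T4
      by (rule final_alg[OF assms(3)])
  qed
qed

end
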